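(* Let $I$ be a finite set. The linear map from the span of posets on $I$ to $\mathbb Z[t]$ given by $$\Phi(P)=\sum_{(S_1|\cdots|S_k)\in\Sigma_P^T}\ \prod_{i=1}^k(|S_i|-1)!\ t^k$$ is a strong valuation on poset cones: it factors as $P\mapsto\Psi(\mathbb 1_{\operatorname{cone}(P)})$ for a linear map $\Psi$ on the span of indicator functions of poset cones on $I$.
   Context: For a poset $P$ on $I$, $\Sigma_P^T$ is the set of transversal ordered set partitions of $P$: ordered set partitions $S_1|\cdots|S_k$ of $I$ into nonempty blocks such that, for each $i$, the restriction $P|_{S_i}$ is an antichain and $S_i$ is a lower ideal (down-closed subset) of $P|_{S_i\sqcup\cdots\sqcup S_k}$. $\operatorname{cone}(P)=\operatorname{cone}\{e_i-e_j:i\ge_P j\}\subseteq\mathbb R^I$. *)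

theory Defs
  imports "HOL-Analysis.Analysis" "HOL-Computational_Algebra.Polynomial"
begin

text \<open>A poset on I is a relation P with partial_order_on I P; (j,i) in P means j <=_P i.
  Vectors in R^I are functions 'a => real (all poset cones have support in I).\<close>

definition std_basis :: "'a \<Rightarrow> 'a \<Rightarrow> real" where
  "std_basis i = (\<lambda>k. if k = i then 1 else 0)"

definition poset_cone :: "('a \<times> 'a) set \<Rightarrow> ('a \<Rightarrow> real) set" where
  "poset_cone P = {x. \<exists>c :: 'a \<times> 'a \<Rightarrow> real. (\<forall>p\<in>P. c p \<ge> 0) \<and>
      x = (\<lambda>k. \<Sum>(j,i)\<in>P. c (j,i) * (std_basis i k - std_basis j k))}"

definition transversal_osp :: "'a set \<Rightarrow> ('a \<times> 'a) set \<Rightarrow> 'a set list set" where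
  "transversal_osp I P = {Ss.
      (\<forall>S\<in>set Ss. S \<noteq> {}) \<and>
      (\<forall>a<length Ss. \<forall>b<length Ss. a \<noteq> b \<longrightarrow> Ss ! a \<inter> Ss ! b = {}) \<and>
      \<Union>(set Ss) = I \<and>
      (\<forall>a<length Ss. \<forall>x\<in>Ss ! a. \<forall>y\<in>Ss ! a. (x, y) \<in> P \<longrightarrow> x = y) \<and>
      (\<forall>a<length Ss. \<forall>x\<in>Ss ! a. \<forall>y\<in>\<Union>(set (drop a Ss)). (y, x) \<in> P \<longrightarrow> y \<in> Ss ! a)}"

definition Phi :: "'a set \<Rightarrow> ('a \<times> 'a) set \<Rightarrow> int poly" where
  "Phi I P = (\<Sum>Ss\<in>transversal_osp I P.
      monom (\<Prod>S\<leftarrow>Ss. fact (card S - 1)) (length Ss))"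

definition poset_cone_span :: "'a set \<Rightarrow> (('a \<Rightarrow> real) \<Rightarrow> int) set" where
  "poset_cone_span I = {f. \<exists>Ps c. finite Ps \<and> (\<forall>P\<in>Ps. partial_order_on I P) \<and>
      f = (\<lambda>x. \<Sum>P\<in>Ps. c P * indicator (poset_cone P) x)}"

end

theory Submission
  imports Defs
begin

definition Zs :: "'a list \<Rightarrow> ('a \<Rightarrow> real) set" where
  "Zs l = {x. \<forall>k. k \<notin> set l \<longrightarrow> x k = 0}"

definition cvx :: "('a \<Rightarrow> real) set \<Rightarrow> bool" where
  "cvx K \<longleftrightarrow> (\<forall>x\<in>K. \<forall>y\<in>K. \<forall>u::real. 0 \<le> u \<and> u \<le> 1 \<longrightarrow> (\<lambda>k. (1-u) * x k + u * y k) \<in> K)"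

definition rlim :: "(real \<Rightarrow> int) \<Rightarrow> real \<Rightarrow> int" where
  "rlim \<phi> t = (THE v. \<exists>\<delta>>0. \<forall>s. t < s \<and> s < t + \<delta> \<longrightarrow> \<phi> s = v)"

primrec chi :: "'a list \<Rightarrow> (('a \<Rightarrow> real) \<Rightarrow> int) \<Rightarrow> int" where
  "chi [] g = g (\<lambda>_. 0)"
| "chi (a # l) g = (\<Sum>t \<in> {t. chi l (\<lambda>x. g (x(a:=t))) \<noteq> rlim (\<lambda>s. chi l (\<lambda>x. g (x(a:=s)))) t}.
       chi l (\<lambda>x. g (x(a:=t))) - rlim (\<lambda>s. chi l (\<lambda>x. g (x(a:=s)))) t)"

lemma rlim_eq:
  assumes "\<delta> > 0" "\<And>s. t < s \<Longrightarrow> s < t + \<delta> \<Longrightarrow> \<phi> s = v"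
  shows "rlim \<phi> t = v"
  unfolding rlim_def
proof (rule the_equality)
  show "\<exists>\<delta>>0. \<forall>s. t < s \<and> s < t + \<delta> \<longrightarrow> \<phi> s = v" using assms by blast
next
  fix w assume "\<exists>\<delta>>0. \<forall>s. t < s \<and> s < t + \<delta> \<longrightarrow> \<phi> s = w"
  then obtain e where e: "e > 0" "\<And>s. t < s \<Longrightarrow> s < t + e \<Longrightarrow> \<phi> s = w" by blast
  define s where "s = t + min e \<delta> / 2"
  have "t < s" "s < t + e" "s < t + \<delta>" using e(1) assms(1) by (auto simp: s_def)
  then show "w = v" using e(2) assms(2) by metis
qed

lemma real_compact_interval:
  fixes S :: "real set"
  assumes "compact S" "S \<noteq> {}"
    and cv: "\<And>x y u. x \<in> S \<Longrightarrow> y \<in> S \<Longrightarrow> 0 \<le> u \<Longrightarrow> u \<le> 1 \<Longrightarrow> (1-u)*x + u*y \<in> S"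
  shows "\<exists>a b. S = {a..b}"
proof -
  obtain a where a: "a \<in> S" "\<And>y. y \<in> S \<Longrightarrow> a \<le> y" using compact_attains_inf[OF assms(1,2)] by blast
  obtain b where b: "b \<in> S" "\<And>y. y \<in> S \<Longrightarrow> y \<le> b" using compact_attains_sup[OF assms(1,2)] by blast
  have "S = {a..b}"
  proof
    show "S \<subseteq> {a..b}" using a b by auto
    show "{a..b} \<subseteq> S"
    proof
      fix t assume t: "t \<in> {a..b}"
      show "t \<in> S"
      proof (cases "a = b")
        case True then show ?thesis using t a by auto
      next
        case False
        then have ab: "a < b" using t by auto
        define u where "u = (t - a) / (b - a)"
        have "0 \<le> u" "u \<le> 1" using t ab by (auto simp: u_def field_simps)
        moreover have "u*(b-a) = t - a" using ab by (simp add: u_def)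
        then have "(1-u)*a + u*b = t" by (simp add: algebra_simps)
        ultimately show ?thesis using cv[OF a(1) b(1)] by metis
      qed
    qed
  qed
  then show ?thesis by blast
qed

lemma continuous_upd: "continuous_on UNIV (\<lambda>z::'a \<Rightarrow> real. z(a:=t))"
proof (rule continuous_on_coordinatewise_then_product)
  fix k
  show "continuous_on UNIV (\<lambda>z::'a\<Rightarrow>real. (z(a:=t)) k)"
    by (cases "k = a") (auto intro: continuous_on_const)
qed

lemma closed_coord_eq: "closed {z::'a \<Rightarrow> real. z a = t}"
  by (rule closed_Collect_eq) (auto intro: continuous_on_const)

lemma chi_family:
  fixes K :: "'i \<Rightarrow> ('a \<Rightarrow> real) set" and c :: "'i \<Rightarrow> int"
  assumes "distinct l" "finite F" "\<And>i. i \<in> F \<Longrightarrow> compact (K i \<inter> Zs l) \<and> cvx (K i \<inter> Zs l)"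
  shows "chi l (\<lambda>x. \<Sum>i\<in>F. c i * indicator (K i) x) = (\<Sum>i\<in>F. if K i \<inter> Zs l = {} then 0 else c i)"
  using assms
proof (induction l arbitrary: K)
  case Nil
  have "Zs [] = {\<lambda>_. 0}" by (auto simp: Zs_def)
  then have "K i \<inter> Zs [] = {} \<longleftrightarrow> (\<lambda>_. 0) \<notin> K i" for i by auto
  then show ?case by (auto intro!: sum.cong simp: indicator_def)
next
  case (Cons a l)
  from Cons.prems have al: "a \<notin> set l" "distinct l" by auto
  define Kt where "Kt i t = {x. x(a:=t) \<in> K i}" for i t
  define Sp where "Sp i = (\<lambda>z. z a) ` (K i \<inter> Zs (a#l))" for i
  have slice_eq: "Kt i t \<inter> Zs l = (\<lambda>z. z(a:=0)) ` (K i \<inter> Zs (a#l) \<inter> {z. z a = t})" for i t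
  proof
    show "Kt i t \<inter> Zs l \<subseteq> (\<lambda>z. z(a:=0)) ` (K i \<inter> Zs (a#l) \<inter> {z. z a = t})"
    proof
      fix x assume x: "x \<in> Kt i t \<inter> Zs l"
      then have "x a = 0" using al by (auto simp: Zs_def)
      then have "x = (x(a:=t))(a:=0)" by auto
      moreover have "x(a:=t) \<in> K i \<inter> Zs (a#l) \<inter> {z. z a = t}"
        using x by (auto simp: Kt_def Zs_def)
      ultimately show "x \<in> (\<lambda>z. z(a:=0)) ` (K i \<inter> Zs (a#l) \<inter> {z. z a = t})" by blast
    qed
  next
    show "(\<lambda>z. z(a:=0)) ` (K i \<inter> Zs (a#l) \<inter> {z. z a = t}) \<subseteq> Kt i t \<inter> Zs l"
    proof
      fix x assume "x \<in> (\<lambda>z. z(a:=0)) ` (K i \<inter> Zs (a#l) \<inter> {z. z a = t})"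
      then obtain z where z: "z \<in> K i" "z \<in> Zs (a#l)" "z a = t" and xz: "x = z(a:=0)" by blast
      have "x(a:=t) = z" using z(3) xz by auto
      then show "x \<in> Kt i t \<inter> Zs l" using z xz by (auto simp: Kt_def Zs_def)
    qed
  qed
  have slice_good: "compact (Kt i t \<inter> Zs l) \<and> cvx (Kt i t \<inter> Zs l)" if iF: "i \<in> F" for i t
  proof
    have "compact (K i \<inter> Zs (a#l) \<inter> {z. z a = t})"
      using compact_Int_closed[of "K i \<inter> Zs (a#l)" "{z. z a = t}"] Cons.prems(3)[OF iF] closed_coord_eq[of a t]
      by (simp add: Int_assoc)
    then show "compact (Kt i t \<inter> Zs l)"
      unfolding slice_eq
      by (rule compact_continuous_image[rotated]) (rule continuous_on_subset[OF continuous_upd], simp)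
  next
    have cv: "cvx (K i \<inter> Zs (a#l))" using Cons.prems(3)[OF iF] by blast
    show "cvx (Kt i t \<inter> Zs l)"
      unfolding cvx_def
    proof (intro ballI allI impI)
      fix x y u assume x: "x \<in> Kt i t \<inter> Zs l" and y: "y \<in> Kt i t \<inter> Zs l" and u: "0 \<le> (u::real) \<and> u \<le> 1"
      have xa: "x(a:=t) \<in> K i \<inter> Zs (a#l)" using x by (auto simp: Kt_def Zs_def)
      have ya: "y(a:=t) \<in> K i \<inter> Zs (a#l)" using y by (auto simp: Kt_def Zs_def)
      have "(\<lambda>k. (1-u) * (x(a:=t)) k + u * (y(a:=t)) k) \<in> K i \<inter> Zs (a#l)"
        using cv xa ya u unfolding cvx_def by blast
      moreover have "(\<lambda>k. (1-u) * (x(a:=t)) k + u * (y(a:=t)) k) = (\<lambda>k. (1-u) * x k + u * y k)(a:=t)"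
        by (auto simp: algebra_simps)
      ultimately show "(\<lambda>k. (1-u) * x k + u * y k) \<in> Kt i t \<inter> Zs l"
        using x y by (auto simp: Kt_def Zs_def)
    qed
  qed
  have nonempty: "(Kt i t \<inter> Zs l \<noteq> {}) \<longleftrightarrow> t \<in> Sp i" for i t
    unfolding slice_eq Sp_def by auto
  define \<phi> where "\<phi> t = chi l (\<lambda>x. \<Sum>i\<in>F. c i * indicator (K i) (x(a:=t)))" for t
  have \<phi>: "\<phi> t = (\<Sum>i\<in>F. if t \<in> Sp i then c i else 0)" for t
  proof -
    have "(\<lambda>x. \<Sum>i\<in>F. c i * indicator (K i) (x(a:=t))) = (\<lambda>x. \<Sum>i\<in>F. c i * indicator (Kt i t) x)"
      by (auto simp: Kt_def indicator_def)
    then have "\<phi> t = chi l (\<lambda>x. \<Sum>i\<in>F. c i * indicator (Kt i t) x)" by (simp add: \<phi>_def)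
    also have "\<dots> = (\<Sum>i\<in>F. if Kt i t \<inter> Zs l = {} then 0 else c i)"
      using Cons.IH[of "\<lambda>i. Kt i t"] al Cons.prems(2) slice_good by blast
    also have "\<dots> = (\<Sum>i\<in>F. if t \<in> Sp i then c i else 0)"
      using nonempty by (intro sum.cong) auto
    finally show ?thesis .
  qed
  have "\<forall>i\<in>F. \<exists>lh. Sp i \<noteq> {} \<longrightarrow> Sp i = {fst lh..snd lh}"
  proof
    fix i assume iF: "i \<in> F"
    have "compact (Sp i)" unfolding Sp_def
      using Cons.prems(3)[OF iF]
      by (intro compact_continuous_image) (auto intro: continuous_on_subset[OF continuous_on_product_coordinates])
    moreover have "(1-u)*x + u*y \<in> Sp i" if xyu: "x \<in> Sp i" "y \<in> Sp i" "0 \<le> (u::real)" "u \<le> 1" for x y u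
    proof -
      obtain zx zy where zx: "zx \<in> K i \<inter> Zs (a#l)" "x = zx a" and zy: "zy \<in> K i \<inter> Zs (a#l)" "y = zy a"
        using xyu(1,2) unfolding Sp_def by blast
      have "(\<lambda>k. (1-u) * zx k + u * zy k) \<in> K i \<inter> Zs (a#l)"
        using Cons.prems(3)[OF iF] zx zy xyu unfolding cvx_def by blast
      then show ?thesis using zx zy unfolding Sp_def by force
    qed
    ultimately show "\<exists>lh. Sp i \<noteq> {} \<longrightarrow> Sp i = {fst lh..snd lh}"
      using real_compact_interval[of "Sp i"] by force
  qed
  then obtain lh where LH: "\<And>i. i \<in> F \<Longrightarrow> Sp i \<noteq> {} \<Longrightarrow> Sp i = {fst (lh i)..snd (lh i)}"
    by metis
  define lo where "lo i = fst (lh i)" for i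
  define hi where "hi i = snd (lh i)" for i
  define F' where "F' = {i\<in>F. Sp i \<noteq> {}}"
  have fF': "finite F'" using Cons.prems(2) by (simp add: F'_def)
  have lohi: "i \<in> F' \<Longrightarrow> lo i \<le> hi i" for i
    using LH[of i] by (force simp: F'_def lo_def hi_def)
  have \<phi>2: "\<phi> t = (\<Sum>i\<in>F'. if lo i \<le> t \<and> t \<le> hi i then c i else 0)" for t
  proof -
    have "\<phi> t = (\<Sum>i\<in>F'. if t \<in> Sp i then c i else 0)"
      unfolding \<phi> F'_def using Cons.prems(2)
      by (intro sum.mono_neutral_right) auto
    also have "\<dots> = (\<Sum>i\<in>F'. if lo i \<le> t \<and> t \<le> hi i then c i else 0)"
    proof (intro sum.cong refl)
      fix i assume "i \<in> F'"
      then have "Sp i = {lo i..hi i}" using LH by (auto simp: F'_def lo_def hi_def)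
      then show "(if t \<in> Sp i then c i else 0) = (if lo i \<le> t \<and> t \<le> hi i then c i else 0)" by simp
    qed
    finally show ?thesis .
  qed
  have rl: "rlim \<phi> t = (\<Sum>i\<in>F'. if lo i \<le> t \<and> t < hi i then c i else 0)" for t
  proof -
    define Ds where "Ds = {d. \<exists>i\<in>F'. (d = hi i - t \<or> d = lo i - t) \<and> d > 0}"
    have fDs: "finite Ds"
    proof -
      have "Ds \<subseteq> (\<lambda>i. hi i - t) ` F' \<union> (\<lambda>i. lo i - t) ` F'" by (auto simp: Ds_def)
      then show ?thesis using fF' finite_subset by blast
    qed
    define \<delta> where "\<delta> = Min (insert 1 Ds)"
    have \<delta>pos: "\<delta> > 0" unfolding \<delta>_def using fDs by (auto simp: Ds_def)
    have \<delta>le: "d \<in> Ds \<Longrightarrow> \<delta> \<le> d" for d unfolding \<delta>_def using fDs by auto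
    show ?thesis
    proof (rule rlim_eq[OF \<delta>pos])
      fix s assume s: "t < s" "s < t + \<delta>"
      show "\<phi> s = (\<Sum>i\<in>F'. if lo i \<le> t \<and> t < hi i then c i else 0)"
        unfolding \<phi>2
      proof (rule sum.cong[OF refl])
        fix i assume i: "i \<in> F'"
        have "(lo i \<le> s \<and> s \<le> hi i) = (lo i \<le> t \<and> t < hi i)"
        proof
          assume a1: "lo i \<le> s \<and> s \<le> hi i"
          show "lo i \<le> t \<and> t < hi i"
          proof (rule ccontr)
            assume "\<not> (lo i \<le> t \<and> t < hi i)"
            then have "t < lo i" using a1 s by auto
            then have "lo i - t \<in> Ds" using i by (auto simp: Ds_def)
            then show False using \<delta>le a1 s by force
          qed
        next
          assume a2: "lo i \<le> t \<and> t < hi i"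
          then have "hi i - t \<in> Ds" using i by (auto simp: Ds_def)
          then show "lo i \<le> s \<and> s \<le> hi i" using \<delta>le a2 s by force
        qed
        then show "(if lo i \<le> s \<and> s \<le> hi i then c i else 0) = (if lo i \<le> t \<and> t < hi i then c i else 0)"
          by simp
      qed
    qed
  qed
  have D: "\<phi> t - rlim \<phi> t = (\<Sum>i\<in>F'. if t = hi i then c i else 0)" for t
  proof -
    have "\<phi> t - rlim \<phi> t = (\<Sum>i\<in>F'. (if lo i \<le> t \<and> t \<le> hi i then c i else 0) - (if lo i \<le> t \<and> t < hi i then c i else 0))"
      unfolding \<phi>2 rl by (simp add: sum_subtractf)
    also have "\<dots> = (\<Sum>i\<in>F'. if t = hi i then c i else 0)"
      using lohi by (intro sum.cong) auto
    finally show ?thesis .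
  qed
  have "chi (a#l) (\<lambda>x. \<Sum>i\<in>F. c i * indicator (K i) x) = (\<Sum>t\<in>{t. \<phi> t \<noteq> rlim \<phi> t}. \<phi> t - rlim \<phi> t)"
    unfolding \<phi>_def[abs_def] chi.simps by (rule refl)
  also have "\<dots> = (\<Sum>t\<in>hi ` F'. \<phi> t - rlim \<phi> t)"
  proof (rule sum.mono_neutral_left)
    show "finite (hi ` F')" using fF' by simp
    show "{t. \<phi> t \<noteq> rlim \<phi> t} \<subseteq> hi ` F'"
    proof
      fix t assume "t \<in> {t. \<phi> t \<noteq> rlim \<phi> t}"
      then have ne: "\<phi> t - rlim \<phi> t \<noteq> 0" by (simp only: mem_Collect_eq right_minus_eq not_False_eq_True)
      have "(\<Sum>i\<in>F'. if t = hi i then c i else 0) = \<phi> t - rlim \<phi> t" by (rule D[symmetric])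
      then have "(\<Sum>i\<in>F'. if t = hi i then c i else 0) \<noteq> 0" using ne by (simp only: not_False_eq_True)
      then obtain i where "i \<in> F'" "(if t = hi i then c i else 0) \<noteq> 0"
        by (rule sum.not_neutral_contains_not_neutral)
      then have "i \<in> F'" "t = hi i" by (auto split: if_splits)
      then show "t \<in> hi ` F'" by blast
    qed
    show "\<forall>i\<in>hi ` F' - {t. \<phi> t \<noteq> rlim \<phi> t}. \<phi> i - rlim \<phi> i = 0" by (simp only: Diff_iff mem_Collect_eq not_not right_minus_eq) blast
  qed
  also have "\<dots> = (\<Sum>t\<in>hi ` F'. \<Sum>i\<in>F'. if t = hi i then c i else 0)" by (simp only: D)
  also have "\<dots> = (\<Sum>i\<in>F'. \<Sum>t\<in>hi ` F'. if t = hi i then c i else 0)" by (rule sum.swap)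
  also have "\<dots> = (\<Sum>i\<in>F'. c i)"
  proof (rule sum.cong[OF refl])
    fix i assume "i \<in> F'"
    then show "(\<Sum>t\<in>hi ` F'. if t = hi i then c i else 0) = c i"
      using fF' by (simp add: sum.delta)
  qed
  also have "\<dots> = (\<Sum>i\<in>F. if K i \<inter> Zs (a#l) = {} then 0 else c i)"
  proof -
    have "(\<Sum>i\<in>F'. c i) = (\<Sum>i\<in>F. if Sp i \<noteq> {} then c i else 0)"
      unfolding F'_def using Cons.prems(2) by (rule sum.inter_filter)
    also have "\<dots> = (\<Sum>i\<in>F. if K i \<inter> Zs (a#l) = {} then 0 else c i)"
      by (intro sum.cong) (auto simp: Sp_def)
    finally show ?thesis .
  qed
  finally show ?case .
qed


definition Gm :: "('a \<times> 'a) set \<Rightarrow> ('a \<times> 'a \<Rightarrow> real) \<Rightarrow> 'a \<Rightarrow> real" where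
  "Gm P c = (\<lambda>k. \<Sum>(j,i)\<in>P. c (j,i) * (std_basis i k - std_basis j k))"

definition Aset :: "'a set \<Rightarrow> ('a \<Rightarrow> real) \<Rightarrow> ('a \<Rightarrow> real) set" where
  "Aset I y = {x. (\<Sum>k\<in>I. y k * x k) = -1 \<and> (\<forall>k. \<bar>x k\<bar> \<le> 1)}"

lemma poset_cone_Gm: "poset_cone P = {x. \<exists>c. (\<forall>p\<in>P. c p \<ge> 0) \<and> x = Gm P c}"
  unfolding poset_cone_def Gm_def by simp

lemma po_sub: "partial_order_on I P \<Longrightarrow> P \<subseteq> I \<times> I"
  by (auto simp: partial_order_on_def preorder_on_def refl_on_def)

lemma po_trans: "partial_order_on I P \<Longrightarrow> trans P"
  by (auto simp: partial_order_on_def preorder_on_def)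

lemma po_antisym: "partial_order_on I P \<Longrightarrow> antisym P"
  by (auto simp: partial_order_on_def)

lemma sum_std: "finite I \<Longrightarrow> i \<in> I \<Longrightarrow> (\<Sum>k\<in>I. y k * std_basis i k) = y i"
  by (simp add: std_basis_def if_distrib sum.delta' cong: if_cong)

lemma Gm_weighted:
  assumes "finite I" "P \<subseteq> I \<times> I"
  shows "(\<Sum>k\<in>I. y k * Gm P c k) = (\<Sum>(j,i)\<in>P. c (j,i) * (y i - y j))"
proof -
  have fP: "finite P" using assms finite_subset[of P "I \<times> I"] by auto
  have "(\<Sum>k\<in>I. y k * Gm P c k) = (\<Sum>k\<in>I. \<Sum>p\<in>P. c p * (y k * std_basis (snd p) k - y k * std_basis (fst p) k))"
    unfolding Gm_def by (simp add: sum_distrib_left case_prod_beta algebra_simps)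
  also have "\<dots> = (\<Sum>p\<in>P. \<Sum>k\<in>I. c p * (y k * std_basis (snd p) k - y k * std_basis (fst p) k))"
    by (rule sum.swap)
  also have "\<dots> = (\<Sum>p\<in>P. c p * (y (snd p) - y (fst p)))"
  proof (rule sum.cong[OF refl])
    fix p assume p: "p \<in> P"
    then have "fst p \<in> I" "snd p \<in> I" using assms by auto
    then show "(\<Sum>k\<in>I. c p * (y k * std_basis (snd p) k - y k * std_basis (fst p) k)) = c p * (y (snd p) - y (fst p))"
      using assms(1) by (simp add: sum_distrib_left[symmetric] sum_subtractf sum_std)
  qed
  finally show ?thesis by (simp add: case_prod_beta)
qed

lemma cone_support:
  assumes "P \<subseteq> I \<times> I" "x \<in> poset_cone P" "k \<notin> I"
  shows "x k = 0"
proof -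
  obtain c where x: "x = Gm P c" using assms(2) unfolding poset_cone_Gm by blast
  have "\<And>j i. (j,i) \<in> P \<Longrightarrow> std_basis i k - std_basis j k = 0"
    using assms(1,3) by (auto simp: std_basis_def)
  then show ?thesis unfolding x Gm_def by (auto intro: sum.neutral)
qed

lemma zero_in_cone: "(\<lambda>_. 0) \<in> poset_cone P"
  unfolding poset_cone_Gm by (rule CollectI, rule exI[of _ "\<lambda>_. 0"]) (simp add: Gm_def)

lemma cvx_Int: "cvx A \<Longrightarrow> cvx B \<Longrightarrow> cvx (A \<inter> B)"
  unfolding cvx_def by blast

lemma cvx_cone: "cvx (poset_cone P)"
  unfolding cvx_def poset_cone_Gm
proof (clarify)
  fix u :: real and c d :: "'a \<times> 'a \<Rightarrow> real"
  assume u: "0 \<le> u" "u \<le> 1" and c: "\<forall>p\<in>P. 0 \<le> c p" and d: "\<forall>p\<in>P. 0 \<le> d p"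
  show "\<exists>e. (\<forall>p\<in>P. 0 \<le> e p) \<and> (\<lambda>k. (1 - u) * Gm P c k + u * Gm P d k) = Gm P e"
  proof (intro exI conjI)
    show "\<forall>p\<in>P. 0 \<le> (\<lambda>p. (1-u) * c p + u * d p) p" using u c d by auto
    show "(\<lambda>k. (1 - u) * Gm P c k + u * Gm P d k) = Gm P (\<lambda>p. (1-u) * c p + u * d p)"
      unfolding Gm_def by (auto simp: sum_distrib_left sum.distrib[symmetric] case_prod_beta algebra_simps intro!: sum.cong)
  qed
qed

lemma cvx_Aset: "cvx (Aset I y)"
  unfolding cvx_def Aset_def
proof (clarify)
  fix x z :: "'a \<Rightarrow> real" and u :: real
  assume u: "0 \<le> u" "u \<le> 1" and x: "(\<Sum>k\<in>I. y k * x k) = - 1" "\<forall>k. \<bar>x k\<bar> \<le> 1"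
     and z: "(\<Sum>k\<in>I. y k * z k) = - 1" "\<forall>k. \<bar>z k\<bar> \<le> 1"
  have "(\<Sum>k\<in>I. y k * ((1 - u) * x k + u * z k)) = (1-u) * (\<Sum>k\<in>I. y k * x k) + u * (\<Sum>k\<in>I. y k * z k)"
    by (simp add: sum_distrib_left sum.distrib[symmetric] sum_subtractf[symmetric] algebra_simps)
  then have "(\<Sum>k\<in>I. y k * ((1 - u) * x k + u * z k)) = -1" using x z by simp
  moreover have "\<bar>(1 - u) * x k + u * z k\<bar> \<le> 1" for k
  proof -
    have "\<bar>(1 - u) * x k + u * z k\<bar> \<le> (1-u) * \<bar>x k\<bar> + u * \<bar>z k\<bar>"
      using u by (metis abs_mult abs_of_nonneg abs_triangle_ineq diff_ge_0_iff_ge)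
    also have "\<dots> \<le> (1-u) * 1 + u * 1"
      using u x z by (intro add_mono mult_left_mono) auto
    finally show ?thesis by simp
  qed
  ultimately show "(\<Sum>k\<in>I. y k * ((1 - u) * x k + u * z k)) = - 1 \<and> (\<forall>k. \<bar>(1 - u) * x k + u * z k\<bar> \<le> 1)"
    by blast
qed

lemma continuous_Gm: "finite P \<Longrightarrow> continuous_on UNIV (Gm P)"
  unfolding Gm_def case_prod_beta
  by (intro continuous_on_coordinatewise_then_product continuous_on_sum continuous_on_mult continuous_on_const)
     (auto intro: continuous_on_product_coordinates)

lemma closed_Aset: "finite I \<Longrightarrow> closed (Aset I y)"
proof -
  assume fI: "finite I"
  have "Aset I y = {x. (\<Sum>k\<in>I. y k * x k) = -1} \<inter> {x. \<forall>k. \<bar>x k\<bar> \<le> 1}"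
    by (auto simp: Aset_def)
  moreover have "closed {x::'a\<Rightarrow>real. (\<Sum>k\<in>I. y k * x k) = -1}"
    by (intro closed_Collect_eq continuous_on_sum continuous_on_mult continuous_on_const)
       (auto intro: continuous_on_product_coordinates)
  moreover have "closed {x::'a\<Rightarrow>real. \<forall>k. \<bar>x k\<bar> \<le> 1}"
    by (intro closed_Collect_all closed_Collect_le continuous_on_rabs continuous_on_const)
       (auto intro: continuous_on_product_coordinates)
  ultimately show ?thesis by auto
qed

lemma z_step:
  assumes "finite I" "partial_order_on I P" "(j,i) \<in> P"
  shows "card {w\<in>I. (w,j)\<in>P} \<le> card {w\<in>I. (w,i)\<in>P}"
    and "j \<noteq> i \<Longrightarrow> card {w\<in>I. (w,j)\<in>P} < card {w\<in>I. (w,i)\<in>P}"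
proof -
  have sub: "{w\<in>I. (w,j)\<in>P} \<subseteq> {w\<in>I. (w,i)\<in>P}"
    using po_trans[OF assms(2)] assms(3) by (auto dest: transD)
  then show "card {w\<in>I. (w,j)\<in>P} \<le> card {w\<in>I. (w,i)\<in>P}"
    using assms(1) by (intro card_mono) auto
  assume ne: "j \<noteq> i"
  have iI: "i \<in> I" "(i,i) \<in> P" using assms(2,3) po_sub[OF assms(2)]
    by (auto simp: partial_order_on_def preorder_on_def refl_on_def)
  have "i \<notin> {w\<in>I. (w,j)\<in>P}"
    using po_antisym[OF assms(2)] assms(3) ne by (auto dest: antisymD)
  then have "{w\<in>I. (w,j)\<in>P} \<subset> {w\<in>I. (w,i)\<in>P}" using sub iI by auto
  then show "card {w\<in>I. (w,j)\<in>P} < card {w\<in>I. (w,i)\<in>P}"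
    using assms(1) by (intro psubset_card_mono) auto
qed

lemma compact_cone_A:
  assumes fI: "finite I" and po: "partial_order_on I P"
  shows "compact (poset_cone P \<inter> Aset I y)"
proof -
  have PI: "P \<subseteq> I \<times> I" using po_sub[OF po] .
  have fP: "finite P" using fI PI finite_subset[of P "I \<times> I"] by auto
  define Poff where "Poff = P - Id"
  define z where "z k = real (card {w\<in>I. (w,k)\<in>P})" for k
  define R where "R = real (card I) * real (card I)"
  define S where "S p = (if p \<in> Poff then {0..R} else {0::real})" for p
  define Cset where "Cset = PiE UNIV S \<inter> {c. Gm P c \<in> Aset I y}"
  have zb: "0 \<le> z k" "z k \<le> real (card I)" for k
    unfolding z_def using fI by (auto intro: card_mono)
  have eq: "poset_cone P \<inter> Aset I y = Gm P ` Cset"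
  proof
    show "poset_cone P \<inter> Aset I y \<subseteq> Gm P ` Cset"
    proof
      fix x assume x: "x \<in> poset_cone P \<inter> Aset I y"
      then obtain c where c: "\<forall>p\<in>P. 0 \<le> c p" "x = Gm P c" unfolding poset_cone_Gm by blast
      define c' where "c' p = (if p \<in> Poff then c p else 0)" for p
      have xc': "x = Gm P c'"
        unfolding c(2) Gm_def
      proof (rule ext, rule sum.cong[OF refl])
        fix k p assume "p \<in> P"
        then show "(case p of (j, i) \<Rightarrow> c (j, i) * (std_basis i k - std_basis j k)) =
             (case p of (j, i) \<Rightarrow> c' (j, i) * (std_basis i k - std_basis j k))"
          by (cases p) (auto simp: c'_def Poff_def)
      qed
      have c'nn: "0 \<le> c' p" for p using c(1) by (auto simp: c'_def Poff_def)
      have xA: "x \<in> Aset I y" using x by blast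
      have "\<bar>(\<Sum>k\<in>I. z k * x k)\<bar> \<le> (\<Sum>k\<in>I. real (card I))"
      proof -
        have "\<bar>(\<Sum>k\<in>I. z k * x k)\<bar> \<le> (\<Sum>k\<in>I. \<bar>z k * x k\<bar>)" by (rule sum_abs)
        also have "\<dots> \<le> (\<Sum>k\<in>I. real (card I))"
        proof (rule sum_mono)
          fix k assume "k \<in> I"
          have "\<bar>x k\<bar> \<le> 1" using xA by (auto simp: Aset_def)
          then have "\<bar>z k * x k\<bar> \<le> z k * 1" using zb(1)[of k] mult_left_mono[of "\<bar>x k\<bar>" 1 "z k"] by (simp add: abs_mult)
          then show "\<bar>z k * x k\<bar> \<le> real (card I)" using zb(2)[of k] by simp
        qed
        finally show ?thesis .
      qed
      then have bnd: "(\<Sum>k\<in>I. z k * x k) \<le> R" by (simp add: R_def)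
      have wt: "(\<Sum>k\<in>I. z k * x k) = (\<Sum>p\<in>P. c' p * (z (snd p) - z (fst p)))"
        unfolding xc' using Gm_weighted[OF fI PI, of z c'] by (simp add: case_prod_beta)
      have c'R: "c' p \<le> R" if p: "p \<in> Poff" for p
      proof -
        have pP: "p \<in> P" "fst p \<noteq> snd p" using p by (auto simp: Poff_def Id_def prod_eq_iff)
        have zz: "z (fst q) \<le> z (snd q)" if "q \<in> P" for q
          using z_step(1)[OF fI po, of "fst q" "snd q"] that by (simp add: z_def)
        have "z (fst p) + 1 \<le> z (snd p)"
          using z_step(2)[OF fI po, of "fst p" "snd p"] pP by (simp add: z_def)
        then have "c' p \<le> c' p * (z (snd p) - z (fst p))"
          using c'nn[of p] mult_left_mono[of 1 "z (snd p) - z (fst p)" "c' p"] by simp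
        also have "\<dots> \<le> (\<Sum>q\<in>P. c' q * (z (snd q) - z (fst q)))"
          by (rule member_le_sum[OF pP(1) _ fP]) (use c'nn zz in \<open>simp add: mult_nonneg_nonneg\<close>)
        finally show ?thesis using wt bnd by linarith
      qed
      have "c' p \<in> S p" for p
      proof (cases "p \<in> Poff")
        case True then show ?thesis using c'R[of p] c'nn[of p] by (simp add: S_def)
      next
        case False then show ?thesis by (simp add: S_def c'_def)
      qed
      then have "c' \<in> PiE UNIV S" by (simp add: PiE_iff)
      moreover have "Gm P c' \<in> Aset I y" using xA xc' by simp
      ultimately have "c' \<in> Cset" unfolding Cset_def by simp
      then show "x \<in> Gm P ` Cset" using xc' by blast
    qed
  next
    show "Gm P ` Cset \<subseteq> poset_cone P \<inter> Aset I y"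
    proof
      fix x assume "x \<in> Gm P ` Cset"
      then obtain c where c: "c \<in> Cset" "x = Gm P c" by blast
      have "\<forall>p\<in>P. 0 \<le> c p"
      proof
        fix p assume "p \<in> P"
        have "c p \<in> S p" using c(1) unfolding Cset_def PiE_iff by blast
        then show "0 \<le> c p" by (auto simp: S_def split: if_splits)
      qed
      then show "x \<in> poset_cone P \<inter> Aset I y" using c unfolding poset_cone_Gm Cset_def by blast
    qed
  qed
  have "compact (PiE UNIV S)"
  proof -
    have "compactin (product_topology (\<lambda>_. euclidean) UNIV) (PiE UNIV S)"
      unfolding compactin_PiE by (auto simp: S_def)
    then show ?thesis by (simp add: euclidean_product_topology)
  qed
  moreover have "closed {c. Gm P c \<in> Aset I y}"
    using closed_vimage[OF closed_Aset[OF fI] continuous_Gm[OF fP]] by (simp add: vimage_def)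
  ultimately have "compact Cset" unfolding Cset_def by (rule compact_Int_closed)
  then show ?thesis unfolding eq
    using compact_continuous_image[OF continuous_on_subset[OF continuous_Gm[OF fP] subset_UNIV]] by blast
qed

lemma cone_A_nonempty:
  assumes fI: "finite I" and po: "partial_order_on I P" and yv: "\<And>k. y k = real (v k)"
  shows "poset_cone P \<inter> Aset I y \<noteq> {} \<longleftrightarrow> (\<exists>(j,i)\<in>P. v i < v j)"
proof
  have PI: "P \<subseteq> I \<times> I" using po_sub[OF po] .
  assume "poset_cone P \<inter> Aset I y \<noteq> {}"
  then obtain x where x: "x \<in> poset_cone P" "x \<in> Aset I y" by blast
  then obtain c where c: "\<forall>p\<in>P. 0 \<le> c p" "x = Gm P c" unfolding poset_cone_Gm by blast
  have "(\<Sum>(j,i)\<in>P. c (j,i) * (y i - y j)) = -1"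
    using x(2) Gm_weighted[OF fI PI, of y c] c(2) by (simp add: Aset_def)
  show "\<exists>(j,i)\<in>P. v i < v j"
  proof (rule ccontr)
    assume "\<not> (\<exists>(j,i)\<in>P. v i < v j)"
    then have "\<forall>(j,i)\<in>P. 0 \<le> c (j,i) * (y i - y j)"
      using c(1) yv by (auto intro!: mult_nonneg_nonneg simp: not_less)
    then have "0 \<le> (\<Sum>(j,i)\<in>P. c (j,i) * (y i - y j))"
      by (intro sum_nonneg) auto
    then show False using \<open>(\<Sum>(j,i)\<in>P. c (j,i) * (y i - y j)) = -1\<close> by simp
  qed
next
  have PI: "P \<subseteq> I \<times> I" using po_sub[OF po] .
  have fP: "finite P" using fI PI finite_subset[of P "I \<times> I"] by auto
  assume "\<exists>(j,i)\<in>P. v i < v j"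
  then obtain j i where ji: "(j,i) \<in> P" "v i < v j" by blast
  define d where "d = y j - y i"
  have d1: "1 \<le> d" using ji(2) yv by (simp add: d_def)
  define c where "c p = (if p = (j,i) then 1/d else 0)" for p
  have cnn: "\<forall>p\<in>P. 0 \<le> c p" using d1 by (simp add: c_def)
  have xk: "Gm P c k = (1/d) * (std_basis i k - std_basis j k)" for k
  proof -
    have "Gm P c k = (\<Sum>p\<in>P. if p = (j,i) then (1/d) * (std_basis i k - std_basis j k) else 0)"
      unfolding Gm_def c_def by (intro sum.cong) (auto split: if_splits)
    also have "\<dots> = (1/d) * (std_basis i k - std_basis j k)"
      using fP ji(1) by (simp add: sum.delta')
    finally show ?thesis .
  qed
  have "(\<Sum>k\<in>I. y k * Gm P c k) = (\<Sum>(j',i')\<in>P. c (j',i') * (y i' - y j'))"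
    by (rule Gm_weighted[OF fI PI])
  also have "\<dots> = (\<Sum>p\<in>P. if p = (j,i) then (1/d) * (y i - y j) else 0)"
    unfolding c_def by (intro sum.cong) (auto split: if_splits)
  also have "\<dots> = (1/d) * (y i - y j)"
    using fP ji(1) by (simp add: sum.delta')
  also have "\<dots> = -1" using d1 by (simp add: d_def field_simps)
  finally have s1: "(\<Sum>k\<in>I. y k * Gm P c k) = -1" .
  have "\<bar>Gm P c k\<bar> \<le> 1" for k
  proof -
    have "\<bar>std_basis i k - std_basis j k\<bar> \<le> 1" by (auto simp: std_basis_def)
    moreover have "0 < 1/d" "1/d \<le> 1" using d1 by auto
    ultimately have "(1/d) * \<bar>std_basis i k - std_basis j k\<bar> \<le> 1 * 1"
      by (intro mult_mono) auto
    then show ?thesis unfolding xk using d1 by (simp add: abs_mult)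
  qed
  then have "Gm P c \<in> Aset I y" using s1 by (simp add: Aset_def)
  moreover have "Gm P c \<in> poset_cone P" using cnn unfolding poset_cone_Gm by blast
  ultimately show "poset_cone P \<inter> Aset I y \<noteq> {}" by blast
qed


definition cross :: "('a \<times> 'a) set \<Rightarrow> 'a set \<Rightarrow> 'a set \<Rightarrow> bool" where
  "cross P A B \<longleftrightarrow> (\<forall>x\<in>A. \<forall>y\<in>B. (y,x) \<notin> P)"

definition antichain :: "('a \<times> 'a) set \<Rightarrow> 'a set \<Rightarrow> bool" where
  "antichain P S \<longleftrightarrow> (\<forall>x\<in>S. \<forall>y\<in>S. (x,y) \<in> P \<longrightarrow> x = y)"

primrec weakL :: "('a \<times> 'a) set \<Rightarrow> 'a set list \<Rightarrow> bool" where
  "weakL P [] = True"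
| "weakL P (S # Ss) = (cross P S (\<Union>(set Ss)) \<and> weakL P Ss)"

primrec strictL :: "('a \<times> 'a) set \<Rightarrow> 'a set list \<Rightarrow> bool" where
  "strictL P [] = True"
| "strictL P (S # Ss) = (antichain P S \<and> cross P S (\<Union>(set Ss)) \<and> strictL P Ss)"

primrec ospL :: "'a set \<Rightarrow> 'a set list \<Rightarrow> bool" where
  "ospL A [] = (A = {})"
| "ospL A (S # Ss) = (S \<noteq> {} \<and> S \<subseteq> A \<and> ospL (A - S) Ss)"

primrec yv :: "'a set list \<Rightarrow> 'a \<Rightarrow> nat" where
  "yv [] k = 0"
| "yv (S # Ss) k = (if k \<in> S then 0 else Suc (yv Ss k))"

lemma cross_Un2: "cross P A (B \<union> C) \<longleftrightarrow> cross P A B \<and> cross P A C"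
  by (auto simp: cross_def)
lemma cross_Un1: "cross P (A \<union> B) C \<longleftrightarrow> cross P A C \<and> cross P B C"
  by (auto simp: cross_def)
lemma cross_empty[simp]: "cross P {} B" "cross P A {}"
  by (auto simp: cross_def)

lemma ospL_union: "ospL A \<rho> \<Longrightarrow> \<Union>(set \<rho>) = A"
  by (induction \<rho> arbitrary: A) auto

lemma ospL_Nil_iff: "ospL {} \<rho> \<longleftrightarrow> \<rho> = []"
  by (cases \<rho>) auto

lemma ospL_append:
  "ospL A xs \<Longrightarrow> ospL B ys \<Longrightarrow> A \<inter> B = {} \<Longrightarrow> ospL (A \<union> B) (xs @ ys)"
proof (induction xs arbitrary: A)
  case Nil then show ?case by simp
next
  case (Cons S xs)
  have "ospL ((A - S) \<union> B) (xs @ ys)" using Cons by auto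
  moreover have "(A - S) \<union> B = (A \<union> B) - S" using Cons.prems by auto
  ultimately show ?case using Cons.prems by auto
qed

lemma ospL_length: "finite A \<Longrightarrow> ospL A \<rho> \<Longrightarrow> length \<rho> \<le> card A"
proof (induction \<rho> arbitrary: A)
  case Nil then show ?case by simp
next
  case (Cons S Ss)
  then have "length Ss \<le> card (A - S)" by auto
  moreover have "card (A - S) < card A"
    using Cons.prems by (metis Diff_subset card_seteq finite_subset le_eq_less_or_eq
          linorder_not_le psubset_card_mono subset_Diff_insert Diff_empty Diff_eq_empty_iff
          ospL.simps(2) Diff_cancel Int_absorb2 inf.orderE Diff_Int_distrib Diff_disjoint)
  ultimately show ?case by simp
qed

lemma ospL_finite: "finite A \<Longrightarrow> finite {\<rho>. ospL A \<rho>}"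
proof -
  assume fA: "finite A"
  have "{\<rho>. ospL A \<rho>} \<subseteq> {xs. set xs \<subseteq> Pow A \<and> length xs \<le> card A}"
    using ospL_union ospL_length[OF fA] by fastforce
  moreover have "finite {xs. set xs \<subseteq> Pow A \<and> length xs \<le> card A}"
    using fA by (intro finite_lists_length_le) auto
  ultimately show ?thesis using finite_subset by blast
qed

lemma weakL_append:
  "weakL P (xs @ ys) \<longleftrightarrow> weakL P xs \<and> weakL P ys \<and> cross P (\<Union>(set xs)) (\<Union>(set ys))"
  by (induction xs) (auto simp: cross_Un2 cross_Un1)

lemma ospL_cons_set:
  assumes "S \<noteq> {}" "S \<subseteq> A"
  shows "{\<rho>. ospL A \<rho>} \<supseteq> (\<lambda>\<rho>. S # \<rho>) ` {\<rho>. ospL (A - S) \<rho>}"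
  using assms by auto

lemma ospL_decomp:
  assumes "A \<noteq> {}"
  shows "{\<rho>. ospL A \<rho>} = (\<lambda>(D,\<rho>). D # \<rho>) ` (SIGMA D:{D. D \<noteq> {} \<and> D \<subseteq> A}. {\<rho>. ospL (A - D) \<rho>})"
proof
  show "{\<rho>. ospL A \<rho>} \<subseteq> (\<lambda>(D,\<rho>). D # \<rho>) ` (SIGMA D:{D. D \<noteq> {} \<and> D \<subseteq> A}. {\<rho>. ospL (A - D) \<rho>})"
  proof
    fix \<rho> assume "\<rho> \<in> {\<rho>. ospL A \<rho>}"
    then show "\<rho> \<in> (\<lambda>(D,\<rho>). D # \<rho>) ` (SIGMA D:{D. D \<noteq> {} \<and> D \<subseteq> A}. {\<rho>. ospL (A - D) \<rho>})"
      using assms by (cases \<rho>) (auto intro!: image_eqI)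
  qed
qed auto

lemma maximal_exists:
  assumes "finite S" "S \<noteq> {}" "trans P" "antisym P"
  shows "\<exists>m\<in>S. \<forall>z\<in>S. (m,z) \<in> P \<longrightarrow> z = m"
proof -
  define h where "h m = card ({w\<in>S. (w,m)\<in>P} \<union> {m})" for m
  have "Max (h ` S) \<in> h ` S" using assms(1,2) by (intro Max_in) auto
  then obtain m where m: "m \<in> S" "h m = Max (h ` S)" by (metis imageE)
  have "\<forall>z\<in>S. (m,z) \<in> P \<longrightarrow> z = m"
  proof (intro ballI impI, rule ccontr)
    fix z assume z: "z \<in> S" "(m,z) \<in> P" "z \<noteq> m"
    have "{w\<in>S. (w,m)\<in>P} \<union> {m} \<subseteq> {w\<in>S. (w,z)\<in>P} \<union> {z}"
      using z m(1) assms(3) by (auto dest: transD)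
    moreover have "z \<notin> {w\<in>S. (w,m)\<in>P} \<union> {m}"
      using z assms(4) by (auto dest: antisymD)
    ultimately have "{w\<in>S. (w,m)\<in>P} \<union> {m} \<subset> {w\<in>S. (w,z)\<in>P} \<union> {z}" by blast
    then have "h m < h z" unfolding h_def using assms(1) by (intro psubset_card_mono) auto
    moreover have "h z \<le> h m" using m(2) z(1) assms(1) by simp
    ultimately show False by simp
  qed
  then show ?thesis using m(1) by blast
qed

lemma sum_neg_one_Pow:
  assumes "finite M" "M \<noteq> {}"
  shows "(\<Sum>E\<in>Pow M. (-1::int) ^ card E) = 0"
proof -
  have "(\<Prod>x\<in>M. (1::int) - 1) = (\<Sum>X\<in>Pow M. (-1) ^ card X * (\<Prod>x\<in>X. 1) * (\<Prod>x\<in>M-X. 1))"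
    by (rule prod_diff_conv_sum[OF assms(1)])
  moreover have "(\<Prod>x\<in>M. (1::int) - 1) = 0" using assms by (simp add: card_gt_0_iff)
  ultimately show ?thesis by simp
qed

lemma sum_compl_Pow:
  assumes "finite S" "N \<subseteq> S"
  shows "(\<Sum>D\<in>{D. N \<subseteq> D \<and> D \<subseteq> S}. (-1::int) ^ card (S - D)) = (\<Sum>E\<in>Pow (S - N). (-1) ^ card E)"
proof (rule sum.reindex_bij_witness[of _ "\<lambda>E. S - E" "\<lambda>D. S - D"])
qed (use assms in auto)

lemma moebius:
  assumes "finite S" "trans P" "antisym P"
  shows "(\<Sum>\<pi>\<in>{\<pi>. ospL S \<pi>}. (-1::int) ^ length \<pi> * (if weakL P \<pi> then 1 else 0))
         = (-1) ^ card S * (if antichain P S then 1 else 0)"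
  using assms(1)
proof (induction "card S" arbitrary: S rule: less_induct)
  case less
  show ?case
  proof (cases "S = {}")
    case True
    have "{\<pi>. ospL S \<pi>} = {[]}" using True by (auto simp: ospL_Nil_iff)
    then show ?thesis using True by (simp add: antichain_def)
  next
    case False
    let ?g = "\<lambda>\<pi>. (-1::int) ^ length \<pi> * (if weakL P \<pi> then 1 else 0)"
    have inj: "inj_on (\<lambda>(D,\<rho>). D # \<rho>) X" for X :: "('a set \<times> 'a set list) set"
      by (auto simp: inj_on_def)
    have fD: "finite {D. D \<noteq> {} \<and> D \<subseteq> S}" using less.prems by auto
    have "(\<Sum>\<pi>\<in>{\<pi>. ospL S \<pi>}. ?g \<pi>)
        = (\<Sum>(D,\<rho>)\<in>(SIGMA D:{D. D \<noteq> {} \<and> D \<subseteq> S}. {\<rho>. ospL (S - D) \<rho>}). ?g (D # \<rho>))"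
      unfolding ospL_decomp[OF False] by (subst sum.reindex[OF inj]) (simp add: case_prod_beta)
    also have "\<dots> = (\<Sum>D\<in>{D. D \<noteq> {} \<and> D \<subseteq> S}. \<Sum>\<rho>\<in>{\<rho>. ospL (S - D) \<rho>}. ?g (D # \<rho>))"
      by (rule sum.Sigma[symmetric]) (use fD less.prems ospL_finite in auto)
    also have "\<dots> = (\<Sum>D\<in>{D. D \<noteq> {} \<and> D \<subseteq> S}.
        - (if cross P D (S - D) \<and> antichain P (S - D) then (-1) ^ card (S - D) else 0))"
    proof (rule sum.cong[OF refl])
      fix D assume D: "D \<in> {D. D \<noteq> {} \<and> D \<subseteq> S}"
      have "(\<Sum>\<rho>\<in>{\<rho>. ospL (S - D) \<rho>}. ?g (D # \<rho>))
          = (\<Sum>\<rho>\<in>{\<rho>. ospL (S - D) \<rho>}. - (if cross P D (S - D) then 1 else 0) * ?g \<rho>)"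
      proof (rule sum.cong[OF refl])
        fix \<rho> assume "\<rho> \<in> {\<rho>. ospL (S - D) \<rho>}"
        then have "\<Union>(set \<rho>) = S - D" by (simp add: ospL_union)
        then show "?g (D # \<rho>) = - (if cross P D (S - D) then 1 else 0) * ?g \<rho>" by auto
      qed
      also have "\<dots> = - (if cross P D (S - D) then 1 else 0) * (\<Sum>\<rho>\<in>{\<rho>. ospL (S - D) \<rho>}. ?g \<rho>)"
        by (simp add: sum_distrib_left)
      also have "\<dots> = - (if cross P D (S - D) then 1 else 0) * ((-1) ^ card (S - D) * (if antichain P (S - D) then 1 else 0))"
      proof -
        have "card (S - D) < card S" using D less.prems by (auto intro: psubset_card_mono)
        then show ?thesis using less.hyps[of "S - D"] less.prems by simp
      qed
      finally show "(\<Sum>\<rho>\<in>{\<rho>. ospL (S - D) \<rho>}. ?g (D # \<rho>)) =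
          - (if cross P D (S - D) \<and> antichain P (S - D) then (-1) ^ card (S - D) else 0)" by simp
    qed
    also have "\<dots> = (-1) ^ card S * (if antichain P S then 1 else 0)"
    proof (cases "antichain P S")
      case True
      have c: "cross P D (S - D) \<and> antichain P (S - D)" if "D \<subseteq> S" for D
        using True that unfolding antichain_def cross_def by blast
      have e: "{D. D \<noteq> {} \<and> D \<subseteq> S} = Pow S - {{}}" by auto
      have s1: "(\<Sum>D\<in>{D. D \<noteq> {} \<and> D \<subseteq> S}.
            - (if cross P D (S - D) \<and> antichain P (S - D) then (-1::int) ^ card (S - D) else 0))
           = (\<Sum>D\<in>Pow S - {{}}. - ((-1::int) ^ card (S - D)))"
        unfolding e
      proof (rule sum.cong[OF refl])
        fix D assume "D \<in> Pow S - {{}}"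
        then have "D \<subseteq> S" by auto
        then show "- (if cross P D (S - D) \<and> antichain P (S - D) then (-1::int) ^ card (S - D) else 0) =
           - ((-1::int) ^ card (S - D))" using c[of D] by simp
      qed
      have s2: "(\<Sum>D\<in>Pow S - {{}}. - ((-1::int) ^ card (S - D))) = - (\<Sum>D\<in>Pow S - {{}}. (-1::int) ^ card (S - D))"
        by (rule sum_negf)
      have s3: "(\<Sum>D\<in>Pow S - {{}}. (-1::int) ^ card (S - D)) = (\<Sum>D\<in>Pow S. (-1::int) ^ card (S - D)) - (-1) ^ card S"
      proof -
        have "finite (Pow S)" "{} \<in> Pow S" using less.prems by auto
        then show ?thesis by (simp only: sum_diff1 if_True Diff_empty)
      qed
      have s4: "(\<Sum>D\<in>Pow S. (-1::int) ^ card (S - D)) = 0"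
      proof -
        have "{D. {} \<subseteq> D \<and> D \<subseteq> S} = Pow S" by auto
        then show ?thesis
          using sum_compl_Pow[OF less.prems, of "{}"] sum_neg_one_Pow[OF less.prems False] by simp
      qed
      show ?thesis unfolding s1 s2 s3 s4 using True by simp
    next
      case False
      define N where "N = {x\<in>S. \<exists>z\<in>S. z \<noteq> x \<and> (x,z) \<in> P}"
      have NS: "N \<subseteq> S" by (auto simp: N_def)
      obtain x0 y0 where xy0: "x0 \<in> S" "y0 \<in> S" "(x0,y0) \<in> P" "x0 \<noteq> y0"
        using False unfolding antichain_def by blast
      then have "x0 \<in> N" unfolding N_def by (intro CollectI conjI bexI[of _ y0]) auto
      then have Nne: "N \<noteq> {}" by blast
      obtain m where m: "m \<in> S" "\<forall>z\<in>S. (m,z) \<in> P \<longrightarrow> z = m"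
        using maximal_exists[OF less.prems \<open>S \<noteq> {}\<close> assms(2,3)] by blast
      have mN: "m \<in> S - N"
      proof -
        have "m \<notin> N" using m unfolding N_def by blast
        then show ?thesis using m(1) by blast
      qed
      have c: "(cross P D (S - D) \<and> antichain P (S - D)) \<longleftrightarrow> N \<subseteq> D" if "D \<subseteq> S" for D
      proof
        assume a: "cross P D (S - D) \<and> antichain P (S - D)"
        show "N \<subseteq> D"
        proof
          fix x assume "x \<in> N"
          then obtain z where z: "x \<in> S" "z \<in> S" "z \<noteq> x" "(x,z) \<in> P" by (auto simp: N_def)
          show "x \<in> D"
          proof (rule ccontr)
            assume "x \<notin> D"
            show False
            proof (cases "z \<in> D")
              case True then show False using a z \<open>x \<notin> D\<close> unfolding cross_def by blast
            next
              case False then show False using a z \<open>x \<notin> D\<close> unfolding antichain_def by blast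
            qed
          qed
        qed
      next
        assume ND: "N \<subseteq> D"
        have "cross P D (S - D)"
          unfolding cross_def
        proof (intro ballI notI)
          fix x y assume xy: "x \<in> D" "y \<in> S - D" "(y,x) \<in> P"
          then have "y \<noteq> x" "x \<in> S" using that by auto
          then have "y \<in> N" using xy unfolding N_def by (intro CollectI conjI bexI[of _ x]) auto
          then show False using ND xy by blast
        qed
        moreover have "antichain P (S - D)"
          unfolding antichain_def
        proof (intro ballI impI)
          fix x y assume xy: "x \<in> S - D" "y \<in> S - D" "(x,y) \<in> P"
          show "x = y"
          proof (rule ccontr)
            assume "x \<noteq> y"
            then have "x \<in> N" using xy unfolding N_def by (intro CollectI conjI bexI[of _ y]) auto
            then show False using ND xy by blast
          qed
        qed
        ultimately show "cross P D (S - D) \<and> antichain P (S - D)" by blast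
      qed
      have "(\<Sum>D\<in>{D. D \<noteq> {} \<and> D \<subseteq> S}.
            - (if cross P D (S - D) \<and> antichain P (S - D) then (-1::int) ^ card (S - D) else 0))
          = (\<Sum>D\<in>{D. D \<noteq> {} \<and> D \<subseteq> S}. - (if N \<subseteq> D then (-1::int) ^ card (S - D) else 0))"
      proof (rule sum.cong[OF refl])
        fix D assume "D \<in> {D. D \<noteq> {} \<and> D \<subseteq> S}"
        then have "D \<subseteq> S" by auto
        then show "- (if cross P D (S - D) \<and> antichain P (S - D) then (-1::int) ^ card (S - D) else 0) =
           - (if N \<subseteq> D then (-1::int) ^ card (S - D) else 0)" using c[of D] by simp
      qed
      also have "\<dots> = - (\<Sum>D\<in>{D. N \<subseteq> D \<and> D \<subseteq> S}. (-1::int) ^ card (S - D))"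
      proof -
        have "(\<Sum>D\<in>{D. D \<noteq> {} \<and> D \<subseteq> S}. (if N \<subseteq> D then (-1::int) ^ card (S - D) else 0))
            = (\<Sum>D\<in>{D\<in>{D. D \<noteq> {} \<and> D \<subseteq> S}. N \<subseteq> D}. (-1::int) ^ card (S - D))"
          by (rule sum.inter_filter[symmetric, OF fD])
        also have "{D\<in>{D. D \<noteq> {} \<and> D \<subseteq> S}. N \<subseteq> D} = {D. N \<subseteq> D \<and> D \<subseteq> S}"
          using Nne by auto
        finally have "(\<Sum>D\<in>{D. D \<noteq> {} \<and> D \<subseteq> S}. (if N \<subseteq> D then (-1::int) ^ card (S - D) else 0))
            = (\<Sum>D\<in>{D. N \<subseteq> D \<and> D \<subseteq> S}. (-1::int) ^ card (S - D))" .
        then show ?thesis by (simp only: sum_negf)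
      qed
      also have "\<dots> = 0"
      proof -
        have "finite (S - N)" "S - N \<noteq> {}" using less.prems mN by auto
        then have "(\<Sum>D\<in>{D. N \<subseteq> D \<and> D \<subseteq> S}. (-1::int) ^ card (S - D)) = 0"
          using sum_compl_Pow[OF less.prems NS] sum_neg_one_Pow[of "S - N"] by simp
        then show ?thesis by simp
      qed
      finally show ?thesis using False by simp
    qed
    finally show ?thesis .
  qed
qed


lemma weak_yv:
  "ospL A \<rho> \<Longrightarrow> weakL P \<rho> \<longleftrightarrow> (\<forall>(j,i)\<in>P. j \<in> A \<longrightarrow> i \<in> A \<longrightarrow> yv \<rho> j \<le> yv \<rho> i)"
proof (induction \<rho> arbitrary: A)
  case Nil then show ?case by auto
next
  case (Cons S Ss)
  have o: "S \<noteq> {}" "S \<subseteq> A" "ospL (A - S) Ss" using Cons.prems by auto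
  have U: "\<Union>(set Ss) = A - S" using ospL_union[OF o(3)] .
  have IH: "weakL P Ss \<longleftrightarrow> (\<forall>(j,i)\<in>P. j \<in> A - S \<longrightarrow> i \<in> A - S \<longrightarrow> yv Ss j \<le> yv Ss i)"
    using Cons.IH[OF o(3)] .
  show ?case
  proof
    assume w: "weakL P (S # Ss)"
    then have cr: "cross P S (A - S)" and wSs: "weakL P Ss" using U by auto
    show "\<forall>(j,i)\<in>P. j \<in> A \<longrightarrow> i \<in> A \<longrightarrow> yv (S # Ss) j \<le> yv (S # Ss) i"
    proof (intro ballI impI, clarify)
      fix j i assume ji: "(j,i) \<in> P" "j \<in> A" "i \<in> A"
      show "yv (S # Ss) j \<le> yv (S # Ss) i"
      proof (cases "j \<in> S")
        case True then show ?thesis by simp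
      next
        case False
        show ?thesis
        proof (cases "i \<in> S")
          case True
          then have "(j,i) \<notin> P" using cr False ji unfolding cross_def by blast
          then show ?thesis using ji by blast
        next
          case iF: False
          then have "yv Ss j \<le> yv Ss i" using IH wSs ji False by blast
          then show ?thesis using False iF by simp
        qed
      qed
    qed
  next
    assume r: "\<forall>(j,i)\<in>P. j \<in> A \<longrightarrow> i \<in> A \<longrightarrow> yv (S # Ss) j \<le> yv (S # Ss) i"
    have "cross P S (A - S)"
      unfolding cross_def
    proof (intro ballI notI)
      fix x y assume xy: "x \<in> S" "y \<in> A - S" "(y,x) \<in> P"
      then have "yv (S # Ss) y \<le> yv (S # Ss) x" using r o(2) by blast
      then show False using xy by simp
    qed
    moreover have "weakL P Ss"
    proof -
      have "\<forall>j i. (j,i) \<in> P \<longrightarrow> j \<in> A - S \<longrightarrow> i \<in> A - S \<longrightarrow> yv Ss j \<le> yv Ss i"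
      proof (intro allI impI)
        fix j i assume ji: "(j,i) \<in> P" "j \<in> A - S" "i \<in> A - S"
        then have "yv (S # Ss) j \<le> yv (S # Ss) i" using r by blast
        then show "yv Ss j \<le> yv Ss i" using ji by simp
      qed
      then show ?thesis unfolding IH by auto
    qed
    ultimately show "weakL P (S # Ss)" using U by simp
  qed
qed

definition TO :: "'a set \<Rightarrow> ('a \<times> 'a) set \<Rightarrow> 'a set list \<Rightarrow> bool" where
  "TO I P Ss \<longleftrightarrow> (\<forall>S\<in>set Ss. S \<noteq> {}) \<and>
      (\<forall>a<length Ss. \<forall>b<length Ss. a \<noteq> b \<longrightarrow> Ss ! a \<inter> Ss ! b = {}) \<and>
      \<Union>(set Ss) = I \<and>
      (\<forall>a<length Ss. \<forall>x\<in>Ss ! a. \<forall>y\<in>Ss ! a. (x, y) \<in> P \<longrightarrow> x = y) \<and>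
      (\<forall>a<length Ss. \<forall>x\<in>Ss ! a. \<forall>y\<in>\<Union>(set (drop a Ss)). (y, x) \<in> P \<longrightarrow> y \<in> Ss ! a)"

lemma transversal_TO: "Ss \<in> transversal_osp I P \<longleftrightarrow> TO I P Ss"
  unfolding transversal_osp_def TO_def by simp

lemma allSuc: "(\<forall>a<Suc n. Q a) \<longleftrightarrow> Q 0 \<and> (\<forall>a<n. Q (Suc a))"
  by (auto simp: less_Suc_eq_0_disj)

lemma disj_Cons:
  "(\<forall>a<length (S#Ss). \<forall>b<length (S#Ss). a \<noteq> b \<longrightarrow> (S#Ss) ! a \<inter> (S#Ss) ! b = {})
   \<longleftrightarrow> S \<inter> \<Union>(set Ss) = {} \<and> (\<forall>a<length Ss. \<forall>b<length Ss. a \<noteq> b \<longrightarrow> Ss ! a \<inter> Ss ! b = {})"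
proof -
  have e: "(\<forall>b<length Ss. S \<inter> Ss ! b = {}) \<longleftrightarrow> S \<inter> \<Union>(set Ss) = {}"
    by (auto simp: set_conv_nth)
  show ?thesis
  proof
    assume H: "\<forall>a<length (S#Ss). \<forall>b<length (S#Ss). a \<noteq> b \<longrightarrow> (S#Ss) ! a \<inter> (S#Ss) ! b = {}"
    have "\<forall>b<length Ss. S \<inter> Ss ! b = {}"
    proof (intro allI impI)
      fix b assume "b < length Ss"
      then show "S \<inter> Ss ! b = {}" using H[rule_format, of 0 "Suc b"] by simp
    qed
    moreover have "\<forall>a<length Ss. \<forall>b<length Ss. a \<noteq> b \<longrightarrow> Ss ! a \<inter> Ss ! b = {}"
    proof (intro allI impI)
      fix a b assume "a < length Ss" "b < length Ss" "a \<noteq> b"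
      then show "Ss ! a \<inter> Ss ! b = {}" using H[rule_format, of "Suc a" "Suc b"] by simp
    qed
    ultimately show "S \<inter> \<Union>(set Ss) = {} \<and> (\<forall>a<length Ss. \<forall>b<length Ss. a \<noteq> b \<longrightarrow> Ss ! a \<inter> Ss ! b = {})"
      using e by blast
  next
    assume H: "S \<inter> \<Union>(set Ss) = {} \<and> (\<forall>a<length Ss. \<forall>b<length Ss. a \<noteq> b \<longrightarrow> Ss ! a \<inter> Ss ! b = {})"
    then have H1: "\<forall>b<length Ss. S \<inter> Ss ! b = {}" using e by blast
    show "\<forall>a<length (S#Ss). \<forall>b<length (S#Ss). a \<noteq> b \<longrightarrow> (S#Ss) ! a \<inter> (S#Ss) ! b = {}"
    proof (intro allI impI)
      fix a b assume ab: "a < length (S#Ss)" "b < length (S#Ss)" "a \<noteq> b"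
      show "(S#Ss) ! a \<inter> (S#Ss) ! b = {}"
      proof (cases a)
        case 0
        then obtain b' where "b = Suc b'" "b' < length Ss" using ab by (cases b) auto
        then show ?thesis using H1 0 by auto
      next
        case (Suc a')
        show ?thesis
        proof (cases b)
          case 0 then show ?thesis using H1 Suc ab by auto
        next
          case (Suc b') then show ?thesis using H \<open>a = Suc a'\<close> ab by auto
        qed
      qed
    qed
  qed
qed

lemma TO_Nil: "TO I P [] \<longleftrightarrow> I = {}"
  unfolding TO_def by auto

definition A4 :: "('a \<times> 'a) set \<Rightarrow> 'a set list \<Rightarrow> bool" where
  "A4 P Ss \<longleftrightarrow> (\<forall>a<length Ss. \<forall>x\<in>Ss ! a. \<forall>y\<in>Ss ! a. (x, y) \<in> P \<longrightarrow> x = y)"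
definition A5 :: "('a \<times> 'a) set \<Rightarrow> 'a set list \<Rightarrow> bool" where
  "A5 P Ss \<longleftrightarrow> (\<forall>a<length Ss. \<forall>x\<in>Ss ! a. \<forall>y\<in>\<Union>(set (drop a Ss)). (y, x) \<in> P \<longrightarrow> y \<in> Ss ! a)"
definition DD :: "'a set list \<Rightarrow> bool" where
  "DD Ss \<longleftrightarrow> (\<forall>a<length Ss. \<forall>b<length Ss. a \<noteq> b \<longrightarrow> Ss ! a \<inter> Ss ! b = {})"

lemma TO_split: "TO I P Ss \<longleftrightarrow> (\<forall>S\<in>set Ss. S \<noteq> {}) \<and> DD Ss \<and> \<Union>(set Ss) = I \<and> A4 P Ss \<and> A5 P Ss"
  unfolding TO_def A4_def A5_def DD_def by (rule refl)

lemma A4_Cons: "A4 P (S#Ss) \<longleftrightarrow> antichain P S \<and> A4 P Ss"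
  unfolding A4_def length_Cons allSuc antichain_def by simp

lemma A5_Cons: "A5 P (S#Ss) \<longleftrightarrow> (\<forall>x\<in>S. \<forall>y\<in>S \<union> \<Union>(set Ss). (y, x) \<in> P \<longrightarrow> y \<in> S) \<and> A5 P Ss"
  unfolding A5_def length_Cons allSuc by simp

lemma DD_Cons: "DD (S#Ss) \<longleftrightarrow> S \<inter> \<Union>(set Ss) = {} \<and> DD Ss"
  unfolding DD_def by (rule disj_Cons)

lemma TO_Cons:
  "TO I P (S # Ss) \<longleftrightarrow> S \<noteq> {} \<and> S \<subseteq> I \<and> antichain P S \<and> cross P S (\<Union>(set Ss)) \<and> TO (I - S) P Ss"
proof
  assume t: "TO I P (S # Ss)"
  then have ne: "S \<noteq> {}" "\<forall>T\<in>set Ss. T \<noteq> {}" and d: "S \<inter> \<Union>(set Ss) = {}" and dd: "DD Ss"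
    and u: "S \<union> \<Union>(set Ss) = I" and a4: "antichain P S" "A4 P Ss"
    and a5: "\<forall>x\<in>S. \<forall>y\<in>S \<union> \<Union>(set Ss). (y, x) \<in> P \<longrightarrow> y \<in> S" "A5 P Ss"
    unfolding TO_split DD_Cons A4_Cons A5_Cons by auto
  have cr: "cross P S (\<Union>(set Ss))"
    unfolding cross_def
  proof (intro ballI notI)
    fix x y assume "x \<in> S" "y \<in> \<Union>(set Ss)" "(y,x) \<in> P"
    then have "y \<in> S" using a5(1) by blast
    then show False using d \<open>y \<in> \<Union>(set Ss)\<close> by blast
  qed
  have "\<Union>(set Ss) = I - S" using u d by blast
  then have "TO (I - S) P Ss" unfolding TO_split using ne(2) dd a4(2) a5(2) by blast
  moreover have "S \<subseteq> I" using u by blast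
  ultimately show "S \<noteq> {} \<and> S \<subseteq> I \<and> antichain P S \<and> cross P S (\<Union>(set Ss)) \<and> TO (I - S) P Ss"
    using ne(1) a4(1) cr by blast
next
  assume r: "S \<noteq> {} \<and> S \<subseteq> I \<and> antichain P S \<and> cross P S (\<Union>(set Ss)) \<and> TO (I - S) P Ss"
  then have t: "TO (I - S) P Ss" and ne: "S \<noteq> {}" and SI: "S \<subseteq> I" and ac: "antichain P S"
    and cr: "cross P S (\<Union>(set Ss))" by auto
  from t have ne2: "\<forall>T\<in>set Ss. T \<noteq> {}" and dd: "DD Ss" and U: "\<Union>(set Ss) = I - S"
    and a4: "A4 P Ss" and a5: "A5 P Ss" unfolding TO_split by auto
  have d: "S \<inter> \<Union>(set Ss) = {}" using U by blast
  have a5': "\<forall>x\<in>S. \<forall>y\<in>S \<union> \<Union>(set Ss). (y, x) \<in> P \<longrightarrow> y \<in> S"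
  proof (intro ballI impI)
    fix x y assume "x \<in> S" "y \<in> S \<union> \<Union>(set Ss)" "(y,x) \<in> P"
    then show "y \<in> S" using cr unfolding cross_def by blast
  qed
  have "S \<union> \<Union>(set Ss) = I" using U SI by blast
  then show "TO I P (S # Ss)"
    unfolding TO_split DD_Cons A4_Cons A5_Cons using ne ne2 d dd ac a4 a5' a5 by simp
qed

lemma TO_iff: "TO I P Ss \<longleftrightarrow> ospL I Ss \<and> strictL P Ss"
proof (induction Ss arbitrary: I)
  case Nil then show ?case by (simp add: TO_Nil)
next
  case (Cons S Ss)
  show ?case
  proof
    assume "TO I P (S # Ss)"
    then show "ospL I (S # Ss) \<and> strictL P (S # Ss)"
      unfolding TO_Cons Cons.IH by (auto dest: ospL_union)
  next
    assume a: "ospL I (S # Ss) \<and> strictL P (S # Ss)"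
    then show "TO I P (S # Ss)"
      unfolding TO_Cons Cons.IH by auto
  qed
qed

lemma transversal_iff: "transversal_osp I P = {Ss. ospL I Ss \<and> strictL P Ss}"
  using transversal_TO TO_iff by blast


definition Wf :: "'a set \<Rightarrow> 'a list \<Rightarrow> 'a set list \<Rightarrow> (('a \<Rightarrow> real) \<Rightarrow> int) \<Rightarrow> int" where
  "Wf I l \<rho> f = f (\<lambda>_. 0) - chi l (\<lambda>x. f x * indicator (Aset I (\<lambda>k. real (yv \<rho> k))) x)"

definition rep :: "('a \<times> 'a) set set \<Rightarrow> (('a \<times> 'a) set \<Rightarrow> int) \<Rightarrow> ('a \<Rightarrow> real) \<Rightarrow> int" where
  "rep Ps c = (\<lambda>x. \<Sum>P\<in>Ps. c P * indicator (poset_cone P) x)"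

lemma W_rep:
  assumes fI: "finite I" and l: "distinct l" "set l = I" and o: "ospL I \<rho>"
    and fPs: "finite Ps" and po: "\<forall>P\<in>Ps. partial_order_on I P"
  shows "Wf I l \<rho> (rep Ps c) = (\<Sum>P\<in>Ps. if weakL P \<rho> then c P else 0)"
proof -
  define A where "A = Aset I (\<lambda>k. real (yv \<rho> k))"
  have f0: "rep Ps c (\<lambda>_. 0) = (\<Sum>P\<in>Ps. c P)"
    unfolding rep_def by (simp add: zero_in_cone indicator_def)
  have fA: "(\<lambda>x. rep Ps c x * indicator A x) = (\<lambda>x. \<Sum>P\<in>Ps. c P * indicator (poset_cone P \<inter> A) x)"
    unfolding rep_def
  proof (rule ext)
    fix x
    have "(\<Sum>P\<in>Ps. c P * indicator (poset_cone P) x) * indicator A x = (\<Sum>P\<in>Ps. c P * indicator (poset_cone P) x * indicator A x)"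
      by (rule sum_distrib_right)
    also have "\<dots> = (\<Sum>P\<in>Ps. c P * indicator (poset_cone P \<inter> A) x)"
      by (rule sum.cong[OF refl]) (simp add: indicator_inter_arith)
    finally show "(\<Sum>P\<in>Ps. c P * indicator (poset_cone P) x) * indicator A x = (\<Sum>P\<in>Ps. c P * indicator (poset_cone P \<inter> A) x)" .
  qed
  have sub: "poset_cone P \<inter> A \<inter> Zs l = poset_cone P \<inter> A" if "P \<in> Ps" for P
  proof -
    have "P \<subseteq> I \<times> I" using po that po_sub by blast
    have "poset_cone P \<subseteq> Zs l"
    proof
      fix x assume x: "x \<in> poset_cone P"
      have "\<forall>k. k \<notin> set l \<longrightarrow> x k = 0"
        using cone_support[OF \<open>P \<subseteq> I \<times> I\<close> x] l(2) by simp
      then show "x \<in> Zs l" unfolding Zs_def by simp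
    qed
    then show ?thesis by blast
  qed
  have good: "compact (poset_cone P \<inter> A \<inter> Zs l) \<and> cvx (poset_cone P \<inter> A \<inter> Zs l)" if "P \<in> Ps" for P
  proof -
    have po': "partial_order_on I P" using po that by blast
    have "compact (poset_cone P \<inter> A)" unfolding A_def by (rule compact_cone_A[OF fI po'])
    moreover have "cvx (poset_cone P \<inter> A)" unfolding A_def by (rule cvx_Int[OF cvx_cone cvx_Aset])
    ultimately show ?thesis unfolding sub[OF that] by blast
  qed
  have ch: "chi l (\<lambda>x. rep Ps c x * indicator A x) = (\<Sum>P\<in>Ps. if poset_cone P \<inter> A \<inter> Zs l = {} then 0 else c P)"
    unfolding fA by (rule chi_family[OF l(1) fPs good])
  have ne: "(poset_cone P \<inter> A \<inter> Zs l = {}) \<longleftrightarrow> weakL P \<rho>" if P: "P \<in> Ps" for P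
  proof -
    have poP: "partial_order_on I P" using po P by blast
    have "(poset_cone P \<inter> A \<noteq> {}) \<longleftrightarrow> (\<exists>(j,i)\<in>P. yv \<rho> i < yv \<rho> j)"
      unfolding A_def by (rule cone_A_nonempty[OF fI poP]) simp
    moreover have "weakL P \<rho> \<longleftrightarrow> (\<forall>(j,i)\<in>P. j \<in> I \<longrightarrow> i \<in> I \<longrightarrow> yv \<rho> j \<le> yv \<rho> i)"
      by (rule weak_yv[OF o])
    moreover have "P \<subseteq> I \<times> I" using po_sub[OF poP] .
    ultimately have "weakL P \<rho> \<longleftrightarrow> \<not> (\<exists>(j,i)\<in>P. yv \<rho> i < yv \<rho> j)"
    proof -
      assume w: "weakL P \<rho> \<longleftrightarrow> (\<forall>(j,i)\<in>P. j \<in> I \<longrightarrow> i \<in> I \<longrightarrow> yv \<rho> j \<le> yv \<rho> i)"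
        and PI: "P \<subseteq> I \<times> I"
      have "(\<forall>(j,i)\<in>P. j \<in> I \<longrightarrow> i \<in> I \<longrightarrow> yv \<rho> j \<le> yv \<rho> i) \<longleftrightarrow> \<not> (\<exists>(j,i)\<in>P. yv \<rho> i < yv \<rho> j)"
      proof
        assume a: "\<forall>(j,i)\<in>P. j \<in> I \<longrightarrow> i \<in> I \<longrightarrow> yv \<rho> j \<le> yv \<rho> i"
        show "\<not> (\<exists>(j,i)\<in>P. yv \<rho> i < yv \<rho> j)"
        proof
          assume "\<exists>(j,i)\<in>P. yv \<rho> i < yv \<rho> j"
          then obtain j i where ji: "(j,i) \<in> P" "yv \<rho> i < yv \<rho> j" by blast
          then have "j \<in> I" "i \<in> I" using PI by auto
          then have "yv \<rho> j \<le> yv \<rho> i" using a ji(1) by blast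
          then show False using ji(2) by simp
        qed
      next
        assume a: "\<not> (\<exists>(j,i)\<in>P. yv \<rho> i < yv \<rho> j)"
        show "\<forall>(j,i)\<in>P. j \<in> I \<longrightarrow> i \<in> I \<longrightarrow> yv \<rho> j \<le> yv \<rho> i"
        proof (intro ballI)
          fix p assume p: "p \<in> P"
          obtain j i where pji: "p = (j,i)" by (cases p)
          have "\<not> yv \<rho> i < yv \<rho> j" using a p pji by blast
          then show "case p of (j,i) \<Rightarrow> j \<in> I \<longrightarrow> i \<in> I \<longrightarrow> yv \<rho> j \<le> yv \<rho> i" using pji by simp
        qed
      qed
      then show ?thesis using w by blast
    qed
    then show ?thesis unfolding sub[OF P] using \<open>(poset_cone P \<inter> A \<noteq> {}) \<longleftrightarrow> (\<exists>(j,i)\<in>P. yv \<rho> i < yv \<rho> j)\<close>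
      by blast
  qed
  have ch2: "(\<Sum>P\<in>Ps. if poset_cone P \<inter> A \<inter> Zs l = {} then 0 else c P) = (\<Sum>P\<in>Ps. if weakL P \<rho> then 0 else c P)"
    by (rule sum.cong[OF refl]) (simp only: ne)
  have "Wf I l \<rho> (rep Ps c) = (\<Sum>P\<in>Ps. c P) - (\<Sum>P\<in>Ps. if weakL P \<rho> then 0 else c P)"
    unfolding Wf_def f0 A_def[symmetric] ch ch2 by (rule refl)
  also have "\<dots> = (\<Sum>P\<in>Ps. c P - (if weakL P \<rho> then 0 else c P))"
    by (rule sum_subtractf[symmetric])
  also have "\<dots> = (\<Sum>P\<in>Ps. if weakL P \<rho> then c P else 0)"
    by (rule sum.cong[OF refl]) simp
  finally show ?thesis .
qed

primrec G :: "'a set \<Rightarrow> 'a list \<Rightarrow> 'a set list \<Rightarrow> 'a set list \<Rightarrow> (('a \<Rightarrow> real) \<Rightarrow> int) \<Rightarrow> int" where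
  "G I l [] pre f = Wf I l pre f"
| "G I l (S # Ss) pre f = (\<Sum>\<pi>\<in>{\<pi>. ospL S \<pi>}. (-1) ^ card S * (-1) ^ length \<pi> * G I l Ss (pre @ \<pi>) f)"

lemma G_rep:
  assumes fI: "finite I" and l: "distinct l" "set l = I"
    and fPs: "finite Ps" and po: "\<forall>P\<in>Ps. partial_order_on I P"
  shows "ospL B pre \<Longrightarrow> ospL C \<tau> \<Longrightarrow> B \<inter> C = {} \<Longrightarrow> B \<union> C = I \<Longrightarrow>
    G I l \<tau> pre (rep Ps c) = (\<Sum>P\<in>Ps. if weakL P pre \<and> cross P (\<Union>(set pre)) (\<Union>(set \<tau>)) \<and> strictL P \<tau> then c P else 0)"
proof (induction \<tau> arbitrary: pre B C)
  case Nil
  then have "ospL I pre" by simp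
  then show ?case using W_rep[OF fI l _ fPs po] by simp
next
  case (Cons S Ss)
  have oC: "S \<noteq> {}" "S \<subseteq> C" "ospL (C - S) Ss" using Cons.prems(2) by auto
  have fS: "finite S" using oC(2) Cons.prems(4) fI finite_subset by blast
  have UB: "\<Union>(set pre) = B" using ospL_union[OF Cons.prems(1)] .
  have USs: "\<Union>(set Ss) = C - S" using ospL_union[OF oC(3)] .
  define R where "R P = (weakL P pre \<and> cross P B S \<and> cross P (B \<union> S) (C - S) \<and> strictL P Ss)" for P
  have IH: "G I l Ss (pre @ \<pi>) (rep Ps c) = (\<Sum>P\<in>Ps. if R P \<and> weakL P \<pi> then c P else 0)"
    if \<pi>: "ospL S \<pi>" for \<pi>
  proof -
    have "ospL (B \<union> S) (pre @ \<pi>)"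
      using ospL_append[OF Cons.prems(1) \<pi>] Cons.prems(3) oC(2) by blast
    moreover have "(B \<union> S) \<inter> (C - S) = {}" "(B \<union> S) \<union> (C - S) = I"
      using Cons.prems(3,4) oC(2) by auto
    ultimately have "G I l Ss (pre @ \<pi>) (rep Ps c) = (\<Sum>P\<in>Ps. if weakL P (pre @ \<pi>) \<and> cross P (\<Union>(set (pre @ \<pi>))) (\<Union>(set Ss)) \<and> strictL P Ss then c P else 0)"
      using Cons.IH[OF _ oC(3)] by blast
    also have "\<dots> = (\<Sum>P\<in>Ps. if R P \<and> weakL P \<pi> then c P else 0)"
    proof (rule sum.cong[OF refl])
      fix P assume "P \<in> Ps"
      have "\<Union>(set \<pi>) = S" using ospL_union[OF \<pi>] .
      then have "(weakL P (pre @ \<pi>) \<and> cross P (\<Union>(set (pre @ \<pi>))) (\<Union>(set Ss)) \<and> strictL P Ss) = (R P \<and> weakL P \<pi>)"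
        unfolding R_def weakL_append using UB USs by auto
      then show "(if weakL P (pre @ \<pi>) \<and> cross P (\<Union>(set (pre @ \<pi>))) (\<Union>(set Ss)) \<and> strictL P Ss then c P else 0) =
            (if R P \<and> weakL P \<pi> then c P else 0)" by simp
    qed
    finally show ?thesis .
  qed
  have "G I l (S # Ss) pre (rep Ps c) = (\<Sum>\<pi>\<in>{\<pi>. ospL S \<pi>}. (-1) ^ card S * (-1) ^ length \<pi> * (\<Sum>P\<in>Ps. if R P \<and> weakL P \<pi> then c P else 0))"
    using IH by simp
  also have "\<dots> = (\<Sum>P\<in>Ps. \<Sum>\<pi>\<in>{\<pi>. ospL S \<pi>}. (-1) ^ card S * (-1) ^ length \<pi> * (if R P \<and> weakL P \<pi> then c P else 0))"
  proof -
    have "(\<Sum>\<pi>\<in>{\<pi>. ospL S \<pi>}. (-1) ^ card S * (-1) ^ length \<pi> * (\<Sum>P\<in>Ps. if R P \<and> weakL P \<pi> then c P else 0))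
       = (\<Sum>\<pi>\<in>{\<pi>. ospL S \<pi>}. \<Sum>P\<in>Ps. (-1) ^ card S * (-1) ^ length \<pi> * (if R P \<and> weakL P \<pi> then c P else 0))"
      by (rule sum.cong[OF refl]) (rule sum_distrib_left)
    also have "\<dots> = (\<Sum>P\<in>Ps. \<Sum>\<pi>\<in>{\<pi>. ospL S \<pi>}. (-1) ^ card S * (-1) ^ length \<pi> * (if R P \<and> weakL P \<pi> then c P else 0))"
      by (rule sum.swap)
    finally show ?thesis .
  qed
  also have "\<dots> = (\<Sum>P\<in>Ps. if R P \<and> antichain P S then c P else 0)"
  proof (rule sum.cong[OF refl])
    fix P assume P: "P \<in> Ps"
    have poP: "partial_order_on I P" using po P by blast
    have mo: "(\<Sum>\<pi>\<in>{\<pi>. ospL S \<pi>}. (-1::int) ^ length \<pi> * (if weakL P \<pi> then 1 else 0))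
         = (-1) ^ card S * (if antichain P S then 1 else 0)"
      by (rule moebius[OF fS po_trans[OF poP] po_antisym[OF poP]])
    have "(\<Sum>\<pi>\<in>{\<pi>. ospL S \<pi>}. (-1) ^ card S * (-1) ^ length \<pi> * (if R P \<and> weakL P \<pi> then c P else 0))
        = (if R P then c P else 0) * (-1) ^ card S * (\<Sum>\<pi>\<in>{\<pi>. ospL S \<pi>}. (-1::int) ^ length \<pi> * (if weakL P \<pi> then 1 else 0))"
      by (cases "R P") (auto simp: sum_distrib_left intro!: sum.cong)
    also have "\<dots> = (if R P then c P else 0) * ((-1) ^ card S * (-1) ^ card S) * (if antichain P S then 1 else 0)"
      unfolding mo by (simp add: algebra_simps)
    also have "\<dots> = (if R P \<and> antichain P S then c P else 0)"
      by (simp add: power_mult_distrib[symmetric])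
    finally show "(\<Sum>\<pi>\<in>{\<pi>. ospL S \<pi>}. (-1) ^ card S * (-1) ^ length \<pi> * (if R P \<and> weakL P \<pi> then c P else 0))
        = (if R P \<and> antichain P S then c P else 0)" .
  qed
  also have "\<dots> = (\<Sum>P\<in>Ps. if weakL P pre \<and> cross P (\<Union>(set pre)) (\<Union>(set (S # Ss))) \<and> strictL P (S # Ss) then c P else 0)"
  proof (rule sum.cong[OF refl])
    fix P assume "P \<in> Ps"
    have "(R P \<and> antichain P S) = (weakL P pre \<and> cross P (\<Union>(set pre)) (\<Union>(set (S # Ss))) \<and> strictL P (S # Ss))"
    proof -
      have cBC: "cross P B C \<longleftrightarrow> cross P B S \<and> cross P B (C - S)"
        using oC(2) cross_Un2[of P B S "C - S"] by (simp add: Un_absorb1)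
      show ?thesis unfolding R_def by (auto simp: cross_Un1 cross_Un2 UB USs cBC)
    qed
    then show "(if R P \<and> antichain P S then c P else 0) =
      (if weakL P pre \<and> cross P (\<Union>(set pre)) (\<Union>(set (S # Ss))) \<and> strictL P (S # Ss) then c P else 0)" by simp
  qed
  finally show ?case .
qed

definition Psi :: "'a set \<Rightarrow> 'a list \<Rightarrow> (('a \<Rightarrow> real) \<Rightarrow> int) \<Rightarrow> int poly" where
  "Psi I l f = (\<Sum>Ss\<in>{Ss. ospL I Ss}. smult (G I l Ss [] f) (monom (\<Prod>S\<leftarrow>Ss. fact (card S - 1)) (length Ss)))"

lemma smult_sum2: "smult a (\<Sum>i\<in>S. f i) = (\<Sum>i\<in>S. smult a (f i))"
  by (induction S rule: infinite_finite_induct) (auto simp: smult_add_right)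

lemma Psi_rep:
  assumes fI: "finite I" and l: "distinct l" "set l = I"
    and fPs: "finite Ps" and po: "\<forall>P\<in>Ps. partial_order_on I P"
  shows "Psi I l (rep Ps c) = (\<Sum>P\<in>Ps. smult (c P) (Phi I P))"
proof -
  define m where "m Ss = (monom (\<Prod>S\<leftarrow>Ss. fact (card S - 1)) (length Ss) :: int poly)" for Ss :: "'a set list"
  define Os where "Os = {Ss. ospL I Ss}"
  have fO: "finite Os" unfolding Os_def using ospL_finite[OF fI] .
  have Gs: "G I l Ss [] (rep Ps c) = (\<Sum>P\<in>Ps. if strictL P Ss then c P else 0)" if "Ss \<in> Os" for Ss
  proof -
    have "ospL I Ss" using that by (simp add: Os_def)
    then have "G I l Ss [] (rep Ps c) = (\<Sum>P\<in>Ps. if weakL P [] \<and> cross P (\<Union>(set [])) (\<Union>(set Ss)) \<and> strictL P Ss then c P else 0)"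
      using G_rep[OF fI l fPs po, of "{}" "[]" I Ss c] by simp
    then show ?thesis by simp
  qed
  have "Psi I l (rep Ps c) = (\<Sum>Ss\<in>Os. smult (\<Sum>P\<in>Ps. if strictL P Ss then c P else 0) (m Ss))"
    unfolding Psi_def Os_def[symmetric] m_def[symmetric] by (rule sum.cong[OF refl]) (simp add: Gs)
  also have "\<dots> = (\<Sum>Ss\<in>Os. \<Sum>P\<in>Ps. smult (if strictL P Ss then c P else 0) (m Ss))"
    by (rule sum.cong[OF refl]) (rule smult_sum)
  also have "\<dots> = (\<Sum>P\<in>Ps. \<Sum>Ss\<in>Os. smult (if strictL P Ss then c P else 0) (m Ss))"
    by (rule sum.swap)
  also have "\<dots> = (\<Sum>P\<in>Ps. smult (c P) (Phi I P))"
  proof (rule sum.cong[OF refl])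
    fix P assume "P \<in> Ps"
    have "(\<Sum>Ss\<in>Os. smult (if strictL P Ss then c P else 0) (m Ss)) = (\<Sum>Ss\<in>Os. if strictL P Ss then smult (c P) (m Ss) else 0)"
      by (rule sum.cong[OF refl]) simp
    also have "\<dots> = (\<Sum>Ss\<in>{Ss\<in>Os. strictL P Ss}. smult (c P) (m Ss))"
      by (rule sum.inter_filter[symmetric, OF fO])
    also have "\<dots> = smult (c P) (\<Sum>Ss\<in>{Ss\<in>Os. strictL P Ss}. m Ss)"
      by (rule smult_sum2[symmetric])
    also have "{Ss\<in>Os. strictL P Ss} = transversal_osp I P"
      unfolding transversal_iff Os_def by auto
    also have "(\<Sum>Ss\<in>transversal_osp I P. m Ss) = Phi I P"
      unfolding Phi_def m_def by (rule refl)
    finally show "(\<Sum>Ss\<in>Os. smult (if strictL P Ss then c P else 0) (m Ss)) = smult (c P) (Phi I P)" .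
  qed
  finally show ?thesis .
qed

lemma sum_if_subset:
  assumes "finite R" "A \<subseteq> R"
  shows "(\<Sum>P\<in>R. if P \<in> A then f P else 0) = (\<Sum>P\<in>A. f P)"
proof -
  have "(\<Sum>P\<in>R. if P \<in> A then f P else 0) = (\<Sum>P\<in>{P\<in>R. P \<in> A}. f P)"
    by (rule sum.inter_filter[symmetric, OF assms(1)])
  also have "{P\<in>R. P \<in> A} = A" using assms(2) by auto
  finally show ?thesis .
qed

theorem proposition8p12:
  fixes I :: "'a set"
  assumes "finite I"
  shows "\<exists>\<Psi> :: (('a \<Rightarrow> real) \<Rightarrow> int) \<Rightarrow> int poly.
    (\<forall>f\<in>poset_cone_span I. \<forall>g\<in>poset_cone_span I. \<Psi> (\<lambda>x. f x + g x) = \<Psi> f + \<Psi> g) \<and>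
    (\<forall>f\<in>poset_cone_span I. \<forall>n::int. \<Psi> (\<lambda>x. n * f x) = smult n (\<Psi> f)) \<and>
    (\<forall>P. partial_order_on I P \<longrightarrow> \<Psi> (indicator (poset_cone P)) = Phi I P)"
proof -
  obtain l where l: "distinct l" "set l = I" using finite_distinct_list[OF assms] by blast
  have span: "f \<in> poset_cone_span I \<longleftrightarrow> (\<exists>Ps c. finite Ps \<and> (\<forall>P\<in>Ps. partial_order_on I P) \<and> f = rep Ps c)" for f
    unfolding poset_cone_span_def rep_def by simp
  let ?\<Psi> = "Psi I l"
  have add: "?\<Psi> (\<lambda>x. f x + g x) = ?\<Psi> f + ?\<Psi> g" if f: "f \<in> poset_cone_span I" and g: "g \<in> poset_cone_span I" for f g
  proof -
    obtain Ps c where Ps: "finite Ps" "\<forall>P\<in>Ps. partial_order_on I P" "f = rep Ps c" using f span by blast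
    obtain Qs d where Qs: "finite Qs" "\<forall>P\<in>Qs. partial_order_on I P" "g = rep Qs d" using g span by blast
    define R where "R = Ps \<union> Qs"
    define e where "e P = (if P \<in> Ps then c P else 0) + (if P \<in> Qs then d P else 0)" for P
    have fR: "finite R" "\<forall>P\<in>R. partial_order_on I P" using Ps Qs by (auto simp: R_def)
    have fg: "(\<lambda>x. f x + g x) = rep R e"
    proof (rule ext)
      fix x
      have "rep R e x = (\<Sum>P\<in>R. (if P \<in> Ps then c P * indicator (poset_cone P) x else 0))
                      + (\<Sum>P\<in>R. (if P \<in> Qs then d P * indicator (poset_cone P) x else 0))"
        unfolding rep_def e_def sum.distrib[symmetric]
        by (rule sum.cong[OF refl]) (simp add: distrib_right)
      also have "\<dots> = f x + g x"
        unfolding Ps(3) Qs(3) rep_def using fR(1)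
        by (simp add: sum_if_subset R_def)
      finally show "f x + g x = rep R e x" by simp
    qed
    have "?\<Psi> (\<lambda>x. f x + g x) = (\<Sum>P\<in>R. smult (e P) (Phi I P))"
      unfolding fg by (rule Psi_rep[OF assms l fR])
    also have "\<dots> = (\<Sum>P\<in>R. if P \<in> Ps then smult (c P) (Phi I P) else 0) + (\<Sum>P\<in>R. if P \<in> Qs then smult (d P) (Phi I P) else 0)"
      unfolding e_def sum.distrib[symmetric] smult_add_left
      by (rule sum.cong[OF refl]) simp
    also have "\<dots> = (\<Sum>P\<in>Ps. smult (c P) (Phi I P)) + (\<Sum>P\<in>Qs. smult (d P) (Phi I P))"
      using fR(1) by (simp add: sum_if_subset R_def)
    also have "\<dots> = ?\<Psi> f + ?\<Psi> g"
      unfolding Ps(3) Qs(3) by (simp add: Psi_rep[OF assms l Ps(1,2)] Psi_rep[OF assms l Qs(1,2)])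
    finally show ?thesis .
  qed
  have mul: "?\<Psi> (\<lambda>x. n * f x) = smult n (?\<Psi> f)" if f: "f \<in> poset_cone_span I" for f n
  proof -
    obtain Ps c where Ps: "finite Ps" "\<forall>P\<in>Ps. partial_order_on I P" "f = rep Ps c" using f span by blast
    have nf: "(\<lambda>x. n * f x) = rep Ps (\<lambda>P. n * c P)"
      unfolding Ps(3) rep_def by (simp add: sum_distrib_left mult.assoc)
    have "?\<Psi> (\<lambda>x. n * f x) = (\<Sum>P\<in>Ps. smult (n * c P) (Phi I P))"
      unfolding nf by (rule Psi_rep[OF assms l Ps(1,2)])
    also have "\<dots> = smult n (?\<Psi> f)"
      unfolding Ps(3) Psi_rep[OF assms l Ps(1,2)] by (simp add: smult_sum2)
    finally show ?thesis .
  qed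
  have ind: "?\<Psi> (indicator (poset_cone P)) = Phi I P" if po: "partial_order_on I P" for P
  proof -
    have "indicator (poset_cone P) = rep {P} (\<lambda>_. 1)" unfolding rep_def by simp
    then show ?thesis using Psi_rep[OF assms l, of "{P}" "\<lambda>_. 1"] po by simp
  qed
  show ?thesis using add mul ind by blast
qed


end
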